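(* Assume $\omega$ satisfies $\omega(x)/\mathrm{tr}\,\omega(x)\ge2\kappa I$ for all $x\in\mathbb Z^d$, with $\kappa\in(0,\frac1{2d}]$. Let $\theta=\frac1{4\kappa}$ (so $\theta\ge d/2$) and $\eta(y)=(1+|y|^2)^{-\theta}$ for $y\in\mathbb R^d$. There exists a constant $C_0=C_0(d,\kappa)>0$ such that for all $x\in\mathbb Z^d$, $$L_\omega\eta(x)\ge-\mathbb 1_{x\in B_{C_0\theta^2}}.$$
   Context: $\omega:\mathbb Z^d\to\{$positive-definite diagonal matrices$\}$, $\omega(x)=\mathrm{diag}[\omega_1(x),\dots,\omega_d(x)]$. $L_\omega u(x)=\sum_{i=1}^d\frac{\omega_i(x)}{2\mathrm{tr}\,\omega(x)}[u(x+e_i)+u(x-e_i)-2u(x)]$. $B_r=\{x\in\mathbb Z^d:|x|<r\}$. *)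

theory Defs
  imports "HOL-Analysis.Analysis"
begin

text \<open>Lattice points of Z^d are modelled as int ^ 'n, with d = CARD('n).
  The environment omega is given by its diagonal entries: omega x i = omega_i(x).\<close>

definition unit_vec :: "'n::finite \<Rightarrow> int ^ 'n" where
  "unit_vec i = (\<chi> j. if j = i then 1 else 0)"

definition real_of_lattice :: "int ^ 'n::finite \<Rightarrow> real ^ 'n" where
  "real_of_lattice x = (\<chi> j. real_of_int (x $ j))"

definition trace_env :: "(int ^ 'n::finite \<Rightarrow> 'n \<Rightarrow> real) \<Rightarrow> int ^ 'n \<Rightarrow> real" where
  "trace_env \<omega> x = (\<Sum>i\<in>UNIV. \<omega> x i)"

definition L_op :: "(int ^ 'n::finite \<Rightarrow> 'n \<Rightarrow> real) \<Rightarrow> (int ^ 'n \<Rightarrow> real) \<Rightarrow> int ^ 'n \<Rightarrow> real" where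
  "L_op \<omega> u x = (\<Sum>i\<in>UNIV. \<omega> x i / (2 * trace_env \<omega> x) *
      (u (x + unit_vec i) + u (x - unit_vec i) - 2 * u x))"

definition ball_lattice :: "real \<Rightarrow> (int ^ 'n::finite) set" where
  "ball_lattice r = {x. norm (real_of_lattice x) < r}"

end

theory Submission
  imports Defs
begin

lemma taylor_powr:
  fixes Q h th :: real assumes Q: "0<Q" and Qh: "0 < Q+h" and th: "0 < th"
  shows "Q powr (-th) * (1 - th*h/Q + th*(th+1)*h^2/(2*Q^2) - th*(th+1)*(th+2)*h^3/(6*Q^3)) \<le> (Q+h) powr (-th)"
proof (cases "h = 0")
  case True then show ?thesis by simp
next
  case False
  define df where "df = (\<lambda>m::nat. \<lambda>t::real. (\<Prod>j<m. (-th - real j)) * t powr (-th - real m))"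
  have D: "\<forall>m t. m < 4 \<and> min Q (Q+h) \<le> t \<and> t \<le> max Q (Q+h) \<longrightarrow> DERIV (df m) t :> df (Suc m) t"
  proof (intro allI impI)
    fix m :: nat and t :: real assume a: "m < 4 \<and> min Q (Q+h) \<le> t \<and> t \<le> max Q (Q+h)"
    then have t: "t > 0" using Q Qh by linarith
    have "DERIV (\<lambda>t. (\<Prod>j<m. (-th - real j)) * t powr (-th - real m)) t :>
          (\<Prod>j<m. (-th - real j)) * ((-th - real m) * t powr (-th - real m - 1))"
      by (intro DERIV_cmult has_real_derivative_powr t)
    moreover have "(\<Prod>j<m. (-th - real j)) * ((-th - real m) * t powr (-th - real m - 1)) = df (Suc m) t"
      unfolding df_def by (simp add: algebra_simps)
    ultimately show "DERIV (df m) t :> df (Suc m) t" unfolding df_def by simp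
  qed
  have "\<exists>t. (if Q+h < Q then Q+h < t \<and> t < Q else Q < t \<and> t < Q+h) \<and>
    (Q+h) powr (-th) = (\<Sum>m<4. (df m Q / fact m) * ((Q+h) - Q)^m) + (df 4 t / fact 4) * ((Q+h) - Q)^4"
    by (rule Taylor[of 4 df "\<lambda>t. t powr (-th)" "min Q (Q+h)" "max Q (Q+h)"]) (use D False in \<open>auto simp: df_def\<close>)
  then obtain t where tt: "(if Q+h < Q then Q+h < t \<and> t < Q else Q < t \<and> t < Q+h)"
    and eq0: "(Q+h) powr (-th) = (\<Sum>m<4. (df m Q / fact m) * ((Q+h) - Q)^m) + (df 4 t / fact 4) * ((Q+h) - Q)^4"
    by blast
  have t: "t > 0" using tt Q Qh by (auto split: if_splits)
  have eq: "(Q+h) powr (-th) = (\<Sum>m<4. (df m Q / fact m) * h^m) + (df 4 t / fact 4) * h^4"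
    using eq0 by simp
  have p4: "(\<Prod>j<4. (-th - real j)) = th*(th+1)*(th+2)*(th+3)"
    by (simp add: numeral_eq_Suc lessThan_Suc algebra_simps)
  have "df 4 t \<ge> 0" unfolding df_def p4
    using th by simp
  then have R: "(df 4 t / fact 4) * h^4 \<ge> 0" by simp
  have pw: "Q powr (-th - real m) = Q powr (-th) / Q^m" for m
    using Q by (simp add: powr_diff powr_realpow)
  have "(\<Sum>m<4. (df m Q / fact m) * h^m) = Q powr (-th) * (1 - th*h/Q + th*(th+1)*h^2/(2*Q^2) - th*(th+1)*(th+2)*h^3/(6*Q^3))"
    unfolding df_def pw using Q apply (simp add: numeral_eq_Suc lessThan_Suc fact_numeral)
    apply (simp add: field_simps)
    done
  then show ?thesis using eq R by linarith
qed


definition NN :: "int ^ 'n::finite \<Rightarrow> real" where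
  "NN x = (\<Sum>j\<in>UNIV. (real_of_int (x $ j))^2)"

lemma NN_nonneg: "NN x \<ge> 0" unfolding NN_def by (simp add: sum_nonneg)

lemma norm_rl: "(norm (real_of_lattice x))^2 = NN x"
  unfolding power2_norm_eq_inner inner_vec_def NN_def real_of_lattice_def
  by (simp add: power2_eq_square)

lemma NN_plus: "NN (x + unit_vec i) = NN x + 2 * real_of_int (x $ i) + 1"
proof -
  have "NN (x + unit_vec i) = (\<Sum>j\<in>UNIV. (real_of_int (x $ j))^2 + (if j = i then 2 * real_of_int (x $ i) + 1 else 0))"
    unfolding NN_def unit_vec_def by (intro sum.cong) (auto simp: power2_eq_square algebra_simps)
  also have "\<dots> = NN x + 2 * real_of_int (x $ i) + 1"
    unfolding NN_def sum.distrib by simp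
  finally show ?thesis .
qed

lemma NN_minus: "NN (x - unit_vec i) = NN x - 2 * real_of_int (x $ i) + 1"
proof -
  have "NN (x - unit_vec i) = (\<Sum>j\<in>UNIV. (real_of_int (x $ j))^2 + (if j = i then - 2 * real_of_int (x $ i) + 1 else 0))"
    unfolding NN_def unit_vec_def by (intro sum.cong) (auto simp: power2_eq_square algebra_simps)
  also have "\<dots> = NN x - 2 * real_of_int (x $ i) + 1"
    unfolding NN_def sum.distrib by simp
  finally show ?thesis .
qed

lemma delta_bound:
  fixes Q s th :: real
  assumes Q: "Q \<ge> 1" and p: "Q + 1 + 2 * s \<ge> 1" and m: "Q + 1 - 2 * s \<ge> 1" and th: "th > 0"
  shows "(Q + 1 + 2 * s) powr (-th) + (Q + 1 - 2 * s) powr (-th) - 2 * Q powr (-th) \<ge>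
     Q powr (-th) * ((-2*th/Q + th*(th+1)/Q^2 - th*(th+1)*(th+2)/(3*Q^3))
        + 4*th*(th+1)*(Q-th-2)/Q^3 * s^2)"
proof -
  have a: "Q powr (-th) * (1 - th*(1+2 * s)/Q + th*(th+1)*(1+2 * s)^2/(2*Q^2) - th*(th+1)*(th+2)*(1+2 * s)^3/(6*Q^3)) \<le> (Q + (1+2 * s)) powr (-th)"
    by (rule taylor_powr) (use Q p th in auto)
  have b: "Q powr (-th) * (1 - th*(1-2 * s)/Q + th*(th+1)*(1-2 * s)^2/(2*Q^2) - th*(th+1)*(th+2)*(1-2 * s)^3/(6*Q^3)) \<le> (Q + (1-2 * s)) powr (-th)"
    by (rule taylor_powr) (use Q m th in auto)
  have e: "Q powr (-th) * (1 - th*(1+2 * s)/Q + th*(th+1)*(1+2 * s)^2/(2*Q^2) - th*(th+1)*(th+2)*(1+2 * s)^3/(6*Q^3))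
     + Q powr (-th) * (1 - th*(1-2 * s)/Q + th*(th+1)*(1-2 * s)^2/(2*Q^2) - th*(th+1)*(th+2)*(1-2 * s)^3/(6*Q^3))
     - 2 * Q powr (-th) = Q powr (-th) * ((-2*th/Q + th*(th+1)/Q^2 - th*(th+1)*(th+2)/(3*Q^3))
        + 4*th*(th+1)*(Q-th-2)/Q^3 * s^2)"
    using Q by (simp add: field_simps power2_eq_square power3_eq_cube)
  have eqs: "Q + (1 + 2 * s) = Q + 1 + 2 * s" "Q + (1 - 2 * s) = Q + 1 - 2 * s" by simp_all
  show ?thesis using a b e unfolding eqs by linarith
qed

lemma final_poly:
  fixes Q th :: real
  assumes th: "th > 0" and Q: "Q \<ge> (th+3)^2"
  shows "(-2*th/Q + th*(th+1)/Q^2 - th*(th+1)*(th+2)/(3*Q^3)) / 2 + 4*th*(th+1)*(Q-th-2)/Q^3 * (1/(4*th)) * (Q - 1) \<ge> 0"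
proof -
  have Qp: "Q > 0" using Q th by (smt (verit) zero_less_power)
  have key: "Q^2 - (th+1)*(th+3)*Q - th*(th+1)*(th+2)/6 \<ge> 0"
  proof -
    have "Q - (th+1)*(th+3) \<ge> 2*(th+3)" using Q by (simp add: power2_eq_square algebra_simps)
    then have "Q * (Q - (th+1)*(th+3)) \<ge> Q * (2*(th+3))" using Qp by (intro mult_left_mono) auto
    then have f1: "Q*Q \<ge> Q*(th*th) + 6*(Q*th) + 9*Q" by (simp add: algebra_simps)
    have "Q * (2*(th+3)) \<ge> (th+3)^2 * (2*(th+3))" using Q th by (intro mult_right_mono) auto
    then have f2: "2*(Q*th) + 6*Q \<ge> 2*(th*th*th) + 18*(th*th) + 54*th + 54" by (simp add: algebra_simps power2_eq_square)
    have sq: "th*th \<ge> 0" and cu: "th*th*th \<ge> 0" using th by simp_all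
    have g: "Q*Q - Q*(th*th) - 4*(Q*th) - 3*Q - ((th*th*th) + 3*(th*th) + 2*th)/6 \<ge> 0"
      using f1 f2 sq cu th by argo
    show ?thesis using g by (simp add: power2_eq_square algebra_simps)
  qed
  have "(-2*th/Q + th*(th+1)/Q^2 - th*(th+1)*(th+2)/(3*Q^3)) / 2 + 4*th*(th+1)*(Q-th-2)/Q^3 * (1/(4*th)) * (Q - 1)
     = ((Q^2 - (th+1)*(th+3)*Q - th*(th+1)*(th+2)/6) + (th+1)*(th+2) + th*(th+1)*Q/2) / Q^3"
    using Qp th by (simp add: field_simps power2_eq_square power3_eq_cube)
  also have "\<dots> \<ge> 0" using key th Qp by (intro divide_nonneg_pos) auto
  finally show ?thesis .
qed


theorem lemma2p5:
  fixes \<kappa> :: real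
  assumes "0 < \<kappa>" and "\<kappa> \<le> 1 / (2 * real CARD('n::finite))"
  shows "\<exists>C0>0. \<forall>\<omega> :: int ^ 'n \<Rightarrow> 'n \<Rightarrow> real.
           (\<forall>x i. 0 < \<omega> x i) \<longrightarrow>
           (\<forall>x i. \<omega> x i / trace_env \<omega> x \<ge> 2 * \<kappa>) \<longrightarrow>
           (let \<theta> = 1 / (4 * \<kappa>);
                \<eta> = (\<lambda>y :: real ^ 'n. (1 + (norm y)\<^sup>2) powr (- \<theta>))
            in \<forall>x. L_op \<omega> (\<lambda>z. \<eta> (real_of_lattice z)) x
                   \<ge> - indicator (ball_lattice (C0 * \<theta>\<^sup>2)) x)"
proof -
  define th where "th = 1 / (4 * \<kappa>)"
  have th: "th > 0" using assms(1) by (simp add: th_def)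
  have kth: "\<kappa> = 1 / (4 * th)" using assms(1) by (simp add: th_def)
  show ?thesis
  proof (intro exI[of _ "(th+3)/th^2"] conjI allI impI)
    show "(th+3)/th^2 > 0" using th by simp
    fix \<omega> :: "int ^ 'n \<Rightarrow> 'n \<Rightarrow> real"
    assume pos: "\<forall>x i. 0 < \<omega> x i" and lb: "\<forall>x i. \<omega> x i / trace_env \<omega> x \<ge> 2 * \<kappa>"
    have C: "(th+3)/th^2 * th^2 = th + 3" using th by simp
    show "let \<theta> = 1 / (4 * \<kappa>);
                \<eta> = (\<lambda>y :: real ^ 'n. (1 + (norm y)\<^sup>2) powr (- \<theta>))
            in \<forall>x. L_op \<omega> (\<lambda>z. \<eta> (real_of_lattice z)) x
                   \<ge> - indicator (ball_lattice ((th+3)/th^2 * \<theta>\<^sup>2)) x"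
      unfolding Let_def th_def[symmetric] C norm_rl
    proof
      fix x :: "int ^ 'n"
      define Q where "Q = 1 + NN x"
      have Q1: "Q \<ge> 1" unfolding Q_def using NN_nonneg[of x] by simp
      define s where "s i = real_of_int (x $ i)" for i
      define w where "w i = \<omega> x i / (2 * trace_env \<omega> x)" for i
      have tr: "trace_env \<omega> x > 0" unfolding trace_env_def
        using pos by (intro sum_pos) auto
      have wsum: "(\<Sum>i\<in>UNIV. w i) = 1/2"
        unfolding w_def sum_divide_distrib[symmetric] using tr by (simp add: trace_env_def)
      have wk: "w i \<ge> \<kappa>" for i
      proof -
        have "\<omega> x i / trace_env \<omega> x \<ge> 2 * \<kappa>" using lb by blast
        then show ?thesis unfolding w_def by simp
      qed
      have w0: "w i \<ge> 0" for i using wk[of i] assms(1) by linarith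
      define P where "P = Q powr (-th)"
      define D where "D i = (Q + 1 + 2 * s i) powr (-th) + (Q + 1 - 2 * s i) powr (-th) - 2 * P" for i
      have L: "L_op \<omega> (\<lambda>z. (1 + NN z) powr - th) x = (\<Sum>i\<in>UNIV. w i * D i)"
        unfolding L_op_def w_def D_def NN_plus NN_minus P_def Q_def s_def
        by (intro sum.cong) (auto simp: algebra_simps)
      have pl: "Q + 1 + 2 * s i \<ge> 1" for i using NN_plus[of x i] NN_nonneg[of "x + unit_vec i"]
        unfolding Q_def s_def by linarith
      have mi: "Q + 1 - 2 * s i \<ge> 1" for i using NN_minus[of x i] NN_nonneg[of "x - unit_vec i"]
        unfolding Q_def s_def by linarith
      show "- indicator (ball_lattice (th + 3)) x \<le> L_op \<omega> (\<lambda>z. (1 + NN z) powr - th) x"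
      proof (cases "x \<in> ball_lattice (th + 3)")
        case True
        have P1: "P \<le> 1"
        proof -
          have "Q powr th \<ge> 1" using Q1 th by (intro ge_one_powr_ge_zero) auto
          then show ?thesis unfolding P_def by (simp add: powr_minus_divide divide_le_eq_1)
        qed
        have "D i \<ge> -2" for i unfolding D_def using P1 by (smt (verit) powr_ge_zero)
        then have "(\<Sum>i\<in>UNIV. w i * D i) \<ge> (\<Sum>i\<in>UNIV. w i * (-2))"
          using w0 by (intro sum_mono mult_left_mono) auto
        also have "(\<Sum>i\<in>UNIV. w i * (-2)) = -1" 
        proof -
          have "(\<Sum>i\<in>UNIV. w i * (-2)) = (\<Sum>i\<in>UNIV. w i) * (-2)" by (rule sum_distrib_right[symmetric])
          then show ?thesis using wsum by simp
        qed
        finally show ?thesis using True L by simp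
      next
        case False
        then have "norm (real_of_lattice x) \<ge> th + 3" unfolding ball_lattice_def by simp
        then have "(norm (real_of_lattice x))^2 \<ge> (th+3)^2" using th by (intro power_mono) auto
        then have Qb: "Q \<ge> (th+3)^2" unfolding Q_def norm_rl by simp
        define D0 where "D0 = -2*th/Q + th*(th+1)/Q^2 - th*(th+1)*(th+2)/(3*Q^3)"
        define sl where "sl = 4*th*(th+1)*(Q-th-2)/Q^3"
        have Qp: "Q > 0" using Q1 by simp
        have sl0: "sl \<ge> 0"
        proof -
          have "th*th \<ge> 0" by simp
          moreover have "(th+3)^2 = th*th + 6*th + 9" by (simp add: power2_eq_square algebra_simps)
          ultimately have "Q - th - 2 \<ge> 0" using Qb th by linarith
          then show ?thesis unfolding sl_def using th Qp by simp
        qed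
        have Di: "D i \<ge> P * (D0 + sl * (s i)^2)" for i
          unfolding D_def P_def D0_def sl_def by (rule delta_bound) (use Q1 pl mi th in auto)
        have P0: "P \<ge> 0" unfolding P_def by simp
        have "(\<Sum>i\<in>UNIV. w i * D i) \<ge> (\<Sum>i\<in>UNIV. w i * (P * (D0 + sl * (s i)^2)))"
          using w0 Di by (intro sum_mono mult_left_mono) auto
        also have "(\<Sum>i\<in>UNIV. w i * (P * (D0 + sl * (s i)^2))) =
            P * (D0 * (\<Sum>i\<in>UNIV. w i) + sl * (\<Sum>i\<in>UNIV. w i * (s i)^2))"
          by (simp add: sum_distrib_left sum.distrib algebra_simps)
        also have "\<dots> = P * (D0 / 2 + sl * (\<Sum>i\<in>UNIV. w i * (s i)^2))" using wsum by simp
        finally have A: "(\<Sum>i\<in>UNIV. w i * D i) \<ge> P * (D0 / 2 + sl * (\<Sum>i\<in>UNIV. w i * (s i)^2))" .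
        have "(\<Sum>i\<in>UNIV. w i * (s i)^2) \<ge> (\<Sum>i\<in>UNIV. \<kappa> * (s i)^2)"
          using wk by (intro sum_mono mult_right_mono) auto
        also have "(\<Sum>i\<in>UNIV. \<kappa> * (s i)^2) = \<kappa> * (Q - 1)"
          unfolding Q_def NN_def s_def by (simp add: sum_distrib_left)
        finally have B: "(\<Sum>i\<in>UNIV. w i * (s i)^2) \<ge> \<kappa> * (Q - 1)" .
        have "D0 / 2 + sl * (\<kappa> * (Q - 1)) \<ge> 0"
          using final_poly[OF th Qb] unfolding D0_def[symmetric] sl_def[symmetric] kth by (simp add: mult.assoc)
        moreover have "sl * (\<Sum>i\<in>UNIV. w i * (s i)^2) \<ge> sl * (\<kappa> * (Q - 1))"
          using B sl0 by (intro mult_left_mono) auto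
        ultimately have "D0 / 2 + sl * (\<Sum>i\<in>UNIV. w i * (s i)^2) \<ge> 0" by linarith
        then have "P * (D0 / 2 + sl * (\<Sum>i\<in>UNIV. w i * (s i)^2)) \<ge> 0" using P0 by simp
        then show ?thesis using A L False by simp
      qed
    qed
  qed
qed

end
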